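(* For every integer $n\ge 1$ there exists an equiangular set of at least $\frac{8}{1089}\,n(4n+33)$ lines in $\mathbb{R}^n$.
   Context: A set of lines in $\mathbb{R}^n$ spanned by unit vectors $v_1,\dots,v_r$ is equiangular if there is a constant $c$ such that $|\langle v_i,v_j\rangle|=c$ for all $1\le i<j\le r$. *)

theory Defs
  imports "HOL-Analysis.Analysis"
begin

definition equiangular_lines :: "(nat \<Rightarrow> 'a::real_inner) \<Rightarrow> nat \<Rightarrow> bool" where
  "equiangular_lines v r \<longleftrightarrow>
     (\<forall>i<r. norm (v i) = 1) \<and>
     (\<forall>i<r. \<forall>j<r. i \<noteq> j \<longrightarrow> span {v i} \<noteq> span {v j}) \<and>
     (\<exists>c. \<forall>i<r. \<forall>j<r. i < j \<longrightarrow> \<bar>v i \<bullet> v j\<bar> = c)"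

end

theory Submission
  imports Defs "HOL-Library.Z2" "HOL-Algebra.Algebraic_Closure_Type"
begin


type_synonym K = "bit alg_closure"

lemma K_two': "(2::K) = 0"
proof -
  have "(2::K) = to_ac (2::bit)" by (simp only: to_ac_numeral)
  also have "\<dots> = 0" by simp
  finally show ?thesis .
qed

lemma K_two: "(1::K) + 1 = 0"
  using K_two' by simp

lemma K_add_self[simp]: "(x::K) + x = 0"
proof -
  have "x + x = x * (1 + 1)" by (simp add: algebra_simps)
  thus ?thesis by (simp add: K_two')
qed

lemma K_minus[simp]: "- (x::K) = x"
  using K_add_self by (metis add_eq_0_iff2)

lemma K_diff: "(x::K) - y = x + y"
  by (metis K_minus diff_conv_add_uminus)

lemma K_add_eq0: "(x::K) + y = 0 \<longleftrightarrow> x = y"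
  by (metis K_add_self K_diff right_minus_eq)

lemma K_of_nat: "(of_nat n :: K) = (if even n then 0 else 1)"
  by (induction n) (auto simp: K_two)


lemma frob2: "((x::K) + y)^2 = x^2 + y^2"
  by (simp add: power2_sum K_two')

lemma frob: "((x::K) + y)^(2^k) = x^(2^k) + y^(2^k)"
proof (induction k)
  case 0 thus ?case by simp
next
  case (Suc k)
  have "(x + y)^(2^Suc k) = ((x+y)^(2^k))^2" by (simp add: power_mult[symmetric] mult.commute)
  also have "\<dots> = (x^(2^k))^2 + (y^(2^k))^2" using Suc by (simp add: frob2)
  also have "\<dots> = x^(2^Suc k) + y^(2^Suc k)" by (simp add: power_mult[symmetric] mult.commute)
  finally show ?case .
qed

lemma frob_sum: "(sum f A :: K)^(2^k) = (\<Sum>i\<in>A. (f i)^(2^k))"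
proof (cases "finite A")
  case True thus ?thesis by (induction A rule: finite_induct) (auto simp: frob)
qed simp

definition Fm :: "nat \<Rightarrow> K set" where "Fm m = {x. x^(2^m) = x}"

lemma Fm_0[simp]: "0 \<in> Fm m" by (simp add: Fm_def)
lemma Fm_1[simp]: "1 \<in> Fm m" by (simp add: Fm_def)
lemma Fm_add[simp]: "x \<in> Fm m \<Longrightarrow> y \<in> Fm m \<Longrightarrow> x + y \<in> Fm m"
  by (simp add: Fm_def frob)
lemma Fm_mult[simp]: "x \<in> Fm m \<Longrightarrow> y \<in> Fm m \<Longrightarrow> x * y \<in> Fm m"
  by (simp add: Fm_def power_mult_distrib)
lemma Fm_inverse[simp]: "x \<in> Fm m \<Longrightarrow> inverse x \<in> Fm m"
  by (simp add: Fm_def power_inverse)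
lemma Fm_divide[simp]: "x \<in> Fm m \<Longrightarrow> y \<in> Fm m \<Longrightarrow> x / y \<in> Fm m"
  by (simp add: divide_inverse)

lemma sep_card:
  fixes p :: "K poly"
  assumes "p \<noteq> 0" "\<forall>a. poly p a = 0 \<longrightarrow> poly (pderiv p) a \<noteq> 0"
  shows "card {x. poly p x = 0} = Polynomial.degree p"
  using assms
proof (induction "Polynomial.degree p" arbitrary: p rule: less_induct)
  case (less p)
  show ?case
  proof (cases "Polynomial.degree p = 0")
    case True
    then obtain c where "p = [:c:]" by (meson degree_eq_zeroE)
    with less.prems have "{x. poly p x = 0} = {}" by auto
    thus ?thesis using True by simp
  next
    case False
    then obtain a where a: "poly p a = 0" using alg_closed_imp_poly_has_root by blast
    then obtain q where q: "p = [:-a,1:] * q" using poly_eq_0_iff_dvd by blast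
    have q0: "q \<noteq> 0" using q less.prems by auto
    have "Polynomial.degree ([:-a,1:] * q) = Polynomial.degree [:-a,1:] + Polynomial.degree q"
      by (rule degree_mult_eq) (use q0 in auto)
    hence dq: "Polynomial.degree p = Suc (Polynomial.degree q)" using q by simp
    have pd1: "pderiv p = [:-a,1:] * pderiv q + q * pderiv [:-a,1:]" unfolding q by (rule pderiv_mult)
    have pd2: "pderiv [:-a,1:] = (1::K poly)" by (simp add: pderiv_pCons)
    have pd: "pderiv p = q + [:-a,1:] * pderiv q"
      using pd1 pd2 by (metis add.commute mult_1_right)
    have qa: "poly q a \<noteq> 0" using less.prems(2) a pd by auto
    have "\<forall>b. poly q b = 0 \<longrightarrow> poly (pderiv q) b \<noteq> 0"
    proof (intro allI impI)
      fix b assume b: "poly q b = 0"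
      hence "poly p b = 0" using q by simp
      hence "poly (pderiv p) b \<noteq> 0" using less.prems(2) by blast
      thus "poly (pderiv q) b \<noteq> 0" using pd b by auto
    qed
    hence IH: "card {x. poly q x = 0} = Polynomial.degree q" using less.hyps[of q] dq q0 by auto
    have pe: "poly p x = (x + a) * poly q x" for x unfolding q by (simp add: algebra_simps)
    have "{x. poly p x = 0} = insert a {x. poly q x = 0}" using a by (auto simp: pe K_add_eq0)
    moreover have "finite {x. poly q x = 0}" using q0 poly_roots_finite by blast
    ultimately show ?thesis using IH qa dq by simp
  qed
qed

lemma card_Fm: assumes "m \<ge> 1" shows "card (Fm m) = 2^m"
proof -
  define p :: "K poly" where "p = Polynomial.monom 1 (2^m) + [:0,1:]"
  have ev: "poly p x = x^(2^m) + x" for x by (simp add: p_def poly_monom)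
  have m2: "(2::nat)^m \<ge> 2" using assms by (metis power_one_right power_increasing_iff one_less_numeral_iff semiring_norm(76))
  have dp: "Polynomial.degree p = 2^m"
  proof -
    have "Polynomial.degree (Polynomial.monom (1::K) (2^m)) = 2^m" by (simp add: degree_monom_eq)
    moreover have "Polynomial.degree [:0::K,1:] = 1" by simp
    ultimately show ?thesis unfolding p_def using m2 by (subst degree_add_eq_left) auto
  qed
  have p0: "p \<noteq> 0" using dp m2 by auto
  have "pderiv p = Polynomial.monom (of_nat (2^m)) (2^m - 1) + 1"
    by (simp add: p_def pderiv_add pderiv_monom pderiv_pCons)
  also have "(of_nat (2^m) :: K) = 0" using assms by (simp add: K_of_nat)
  finally have "pderiv p = 1" by simp
  hence "\<forall>a. poly p a = 0 \<longrightarrow> poly (pderiv p) a \<noteq> 0" by simp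
  hence "card {x. poly p x = 0} = 2^m" using sep_card[OF p0] dp by simp
  moreover have "{x. poly p x = 0} = Fm m" by (auto simp: ev Fm_def K_add_eq0)
  ultimately show ?thesis by simp
qed

lemma finite_Fm: assumes "m \<ge> 1" shows "finite (Fm m)"
  using card_Fm[OF assms] by (metis card.infinite power_not_zero zero_neq_numeral)



lemma zero_pow2[simp]: "(0::K)^(2^i) = 0" by (simp add: power_0_left)

declare K_two'[simp]

definition tr :: "nat \<Rightarrow> K \<Rightarrow> K" where "tr m x = (\<Sum>i<m. x^(2^i))"

lemma tr_add: "tr m (x + y) = tr m x + tr m y"
  by (simp add: tr_def frob sum.distrib)

lemma tr_0[simp]: "tr m 0 = 0" by (simp add: tr_def)

lemma tr_1: "odd m \<Longrightarrow> tr m 1 = 1"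
  by (simp add: tr_def K_of_nat)

lemma shift_sum:
  fixes a :: "nat \<Rightarrow> 'a::comm_ring"
  assumes "a m = a 0"
  shows "(\<Sum>i<m. a (Suc i)) = (\<Sum>i<m. a i)"
proof -
  have "(\<Sum>i<Suc m. a i) = a 0 + (\<Sum>i<m. a (Suc i))" by (rule sum.lessThan_Suc_shift)
  moreover have "(\<Sum>i<Suc m. a i) = (\<Sum>i<m. a i) + a m" by simp
  ultimately show ?thesis using assms by (simp add: algebra_simps)
qed

lemma Fm_pow: "x \<in> Fm m \<Longrightarrow> x^(2^m) = x" by (simp add: Fm_def)

lemma tr_sq: assumes "x \<in> Fm m" shows "(tr m x)^2 = tr m x"
proof -
  have "(tr m x)^(2^1) = (\<Sum>i<m. (x^(2^i))^(2^1))" unfolding tr_def by (rule frob_sum)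
  also have "\<dots> = (\<Sum>i<m. x^(2^(Suc i)))" by (simp add: power_mult[symmetric] mult.commute)
  also have "\<dots> = (\<Sum>i<m. x^(2^i))"
    by (rule shift_sum[where a="\<lambda>i. x^(2^i)"]) (simp add: Fm_pow[OF assms])
  finally show ?thesis by (simp add: tr_def)
qed

lemma sq_self: "(x::K)^2 = x \<Longrightarrow> x = 0 \<or> x = 1"
  by (metis power2_eq_square mult_cancel_left1 mult.commute)  

lemma tr_01: "x \<in> Fm m \<Longrightarrow> tr m x = 0 \<or> tr m x = 1"
  using tr_sq sq_self by blast

lemma tr_nonzero: assumes "m \<ge> 1" shows "\<exists>y\<in>Fm m. tr m y = 1"
proof (rule ccontr)
  assume H: "\<not> ?thesis"
  define T :: "K poly" where "T = (\<Sum>i<m. Polynomial.monom 1 (2^i))"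
  have ev: "poly T x = tr m x" for x by (simp add: T_def tr_def poly_sum poly_monom)
  have cT: "Polynomial.coeff T (2^(m-1)) = 1"
  proof -
    have "Polynomial.coeff T (2^(m-1)) = (\<Sum>i<m. if 2^i = (2::nat)^(m-1) then 1 else 0)"
      by (simp add: T_def coeff_sum coeff_monom)
    also have "\<dots> = (\<Sum>i\<in>{m-1}. 1)"
      by (rule sum.mono_neutral_cong_right) (use assms in auto)
    finally show ?thesis by simp
  qed
  hence T0: "T \<noteq> 0" by auto
  have dT: "Polynomial.degree T \<le> 2^(m-1)" unfolding T_def
    by (rule degree_sum_le) (auto simp: degree_monom_le intro: order.trans[OF degree_monom_le])
  have "Fm m \<subseteq> {x. poly T x = 0}" using H tr_01 by (auto simp: ev)
  hence "card (Fm m) \<le> card {x. poly T x = 0}" using poly_roots_finite[OF T0] by (rule card_mono[rotated])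
  also have "\<dots> \<le> 2^(m-1)" using card_poly_roots_bound[OF T0] dT by linarith
  finally have "card (Fm m) \<le> 2^(m-1)" .
  moreover have "(2::nat)^(m-1) < 2^m" by (subst power_strict_increasing_iff) (use assms in auto)
  ultimately show False using card_Fm[OF assms] by linarith
qed

lemma tr_nondeg: assumes "m \<ge> 1" "w \<in> Fm m" "w \<noteq> 0" shows "\<exists>y\<in>Fm m. tr m (w * y) = 1"
proof -
  obtain y where y: "y \<in> Fm m" "tr m y = 1" using tr_nonzero[OF assms(1)] by blast
  show ?thesis
    by (rule bexI[of _ "y / w"]) (use y assms in auto)
qed

definition e2 :: "nat \<Rightarrow> K \<Rightarrow> K" where "e2 m z = (\<Sum>j<m. \<Sum>i<j. z^(2^i) * z^(2^j))"

lemma pair_split: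
  fixes g :: "nat \<Rightarrow> nat \<Rightarrow> 'a::comm_monoid_add"
  shows "(\<Sum>i<m. \<Sum>j<m. g i j) = (\<Sum>j<m. \<Sum>i<j. g i j) + (\<Sum>i<m. g i i) + (\<Sum>i<m. \<Sum>j<i. g i j)"
proof (induction m)
  case 0 thus ?case by simp
next
  case (Suc m)
  have "(\<Sum>i<Suc m. \<Sum>j<Suc m. g i j) = (\<Sum>i<m. \<Sum>j<m. g i j) + (\<Sum>i<m. g i m) + (\<Sum>j<m. g m j) + g m m"
    by (simp add: sum.distrib algebra_simps)
  also have "\<dots> = (\<Sum>j<Suc m. \<Sum>i<j. g i j) + (\<Sum>i<Suc m. g i i) + (\<Sum>i<Suc m. \<Sum>j<i. g i j)"
    using Suc by (simp add: algebra_simps)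
  finally show ?case .
qed

lemma e2_add: "e2 m (x + y) = e2 m x + e2 m y + tr m x * tr m y + tr m (x * y)"
proof -
  define a where "a i = x^(2^i)" for i
  define b where "b i = y^(2^i)" for i
  have xy: "(x+y)^(2^i) = a i + b i" for i by (simp add: a_def b_def frob)
  have "e2 m (x + y) = (\<Sum>j<m. \<Sum>i<j. (a i + b i) * (a j + b j))" by (simp add: e2_def xy)
  also have "\<dots> = e2 m x + e2 m y + ((\<Sum>j<m. \<Sum>i<j. a i * b j) + (\<Sum>j<m. \<Sum>i<j. b i * a j))"
    by (simp add: e2_def a_def b_def algebra_simps sum.distrib)
  also have "(\<Sum>j<m. \<Sum>i<j. b i * a j) = (\<Sum>i<m. \<Sum>j<i. a i * b j)" by (simp add: mult.commute)
  also have "tr m x * tr m y = (\<Sum>i<m. \<Sum>j<m. a i * b j)"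
    by (simp add: tr_def a_def b_def sum_product)
  hence "tr m x * tr m y = (\<Sum>j<m. \<Sum>i<j. a i * b j) + (\<Sum>i<m. a i * b i) + (\<Sum>i<m. \<Sum>j<i. a i * b j)"
    using pair_split[of "\<lambda>i j. a i * b j" m] by simp
  moreover have "tr m (x * y) = (\<Sum>i<m. a i * b i)" by (simp add: tr_def a_def b_def power_mult_distrib)
  ultimately show ?thesis by (simp add: algebra_simps)
qed

lemma shift_e2:
  fixes a :: "nat \<Rightarrow> 'a::comm_ring"
  assumes "a m = a 0"
  shows "(\<Sum>j<m. \<Sum>i<j. a (Suc i) * a (Suc j)) = (\<Sum>j<m. \<Sum>i<j. a i * a j)"
proof -
  define P where "P k = (\<Sum>j<k. \<Sum>i<j. a i * a j)" for k
  have s1: "(\<Sum>i<j. a (Suc i) * a (Suc j)) = (\<Sum>i<Suc j. a i * a (Suc j)) - a 0 * a (Suc j)" for j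
  proof -
    have "(\<Sum>i<Suc j. a i * a (Suc j)) = a 0 * a (Suc j) + (\<Sum>i<j. a (Suc i) * a (Suc j))"
      by (rule sum.lessThan_Suc_shift)
    thus ?thesis by simp
  qed
  have "(\<Sum>j<m. \<Sum>i<j. a (Suc i) * a (Suc j)) = (\<Sum>j<m. (\<Sum>i<Suc j. a i * a (Suc j)) - a 0 * a (Suc j))"
    by (simp only: s1)
  also have "\<dots> = (\<Sum>j<m. \<Sum>i<Suc j. a i * a (Suc j)) - a 0 * (\<Sum>j<m. a (Suc j))"
    by (simp add: sum_subtractf sum_distrib_left)
  also have "(\<Sum>j<m. \<Sum>i<Suc j. a i * a (Suc j)) = P (Suc m)"
    unfolding P_def by (subst sum.lessThan_Suc_shift) simp
  also have "P (Suc m) = P m + a 0 * (\<Sum>i<m. a i)"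
    by (simp add: P_def assms sum_distrib_left sum_distrib_right mult.commute)
  also have "(\<Sum>j<m. a (Suc j)) = (\<Sum>i<m. a i)" by (rule shift_sum[OF assms])
  finally show ?thesis by (simp add: P_def)
qed

lemma e2_sq: assumes "z \<in> Fm m" shows "(e2 m z)^2 = e2 m z"
proof -
  define a where "a i = z^(2^i)" for i
  have "(e2 m z)^(2^1) = (\<Sum>j<m. \<Sum>i<j. (a i * a j)^(2^1))"
    unfolding e2_def a_def by (simp only: frob_sum)
  also have "\<dots> = (\<Sum>j<m. \<Sum>i<j. a (Suc i) * a (Suc j))"
    by (simp add: a_def power_mult_distrib power_mult[symmetric] mult.commute)
  also have "\<dots> = (\<Sum>j<m. \<Sum>i<j. a i * a j)"
    by (rule shift_e2) (simp add: a_def Fm_pow[OF assms])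
  finally show ?thesis by (simp add: e2_def a_def)
qed

lemma e2_01: "z \<in> Fm m \<Longrightarrow> e2 m z = 0 \<or> e2 m z = 1"
  using e2_sq sq_self by blast

lemma e2_0[simp]: "e2 m 0 = 0" by (simp add: e2_def)



definition B01 :: "K \<Rightarrow> bool" where "B01 t \<longleftrightarrow> t = 0 \<or> t = 1"

lemma B01_0[simp]: "B01 0" and B01_1[simp]: "B01 1" by (auto simp: B01_def)
lemma B01_add[simp]: "B01 a \<Longrightarrow> B01 b \<Longrightarrow> B01 (a + b)" by (auto simp: B01_def)
lemma B01_mult[simp]: "B01 a \<Longrightarrow> B01 b \<Longrightarrow> B01 (a * b)" by (auto simp: B01_def)
lemma B01_tr[simp]: "x \<in> Fm m \<Longrightarrow> B01 (tr m x)" using tr_01 by (auto simp: B01_def)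
lemma B01_e2[simp]: "x \<in> Fm m \<Longrightarrow> B01 (e2 m x)" using e2_01 by (auto simp: B01_def)
lemma B01_Fm: "B01 a \<Longrightarrow> a \<in> Fm m" by (auto simp: B01_def)

definition sg :: "K \<Rightarrow> real" where "sg t = (if t = 0 then 1 else -1)"

lemma sg_add: "B01 a \<Longrightarrow> B01 b \<Longrightarrow> sg (a + b) = sg a * sg b"
  by (auto simp: B01_def sg_def K_two)
lemma sg_sq[simp]: "sg a * sg a = 1" by (simp add: sg_def)
lemma sg_abs[simp]: "\<bar>sg a\<bar> = 1" by (simp add: sg_def)
lemma sg_0[simp]: "sg 0 = 1" by (simp add: sg_def)
lemma sg_1[simp]: "sg 1 = -1" by (simp add: sg_def)

definition padd :: "K \<times> K \<Rightarrow> K \<times> K \<Rightarrow> K \<times> K" where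
  "padd v w = (fst v + fst w, snd v + snd w)"

lemma padd_self[simp]: "padd v v = (0,0)" by (simp add: padd_def)
lemma padd_padd[simp]: "padd v (padd v w) = w" by (simp add: padd_def add.assoc[symmetric])
lemma padd_0[simp]: "padd v (0,0) = v" by (simp add: padd_def)
lemma padd_comm: "padd v w = padd w v" by (simp add: padd_def add.commute)

lemma char_sum:
  fixes V :: "(K \<times> K) set"
  assumes fin: "finite V" and cl: "\<And>v w. v \<in> V \<Longrightarrow> w \<in> V \<Longrightarrow> padd v w \<in> V"
    and lin: "\<And>v w. v \<in> V \<Longrightarrow> w \<in> V \<Longrightarrow> l (padd v w) = l v + l w"
    and b: "\<And>v. v \<in> V \<Longrightarrow> B01 (l v)"
    and v0: "v0 \<in> V" "l v0 = 1"
  shows "(\<Sum>v\<in>V. sg (l v)) = 0"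
proof -
  have "(\<Sum>v\<in>V. sg (l (padd v0 v))) = (\<Sum>v\<in>V. sg (l v))"
    by (rule sum.reindex_bij_witness[where i="padd v0" and j="padd v0"]) (auto intro: cl v0)
  moreover have "sg (l (padd v0 v)) = - sg (l v)" if "v \<in> V" for v
    using that v0 by (simp add: lin sg_add b) 
  ultimately have "(\<Sum>v\<in>V. sg (l v)) = (\<Sum>v\<in>V. - sg (l v))" by (metis (no_types, lifting) sum.cong)
  thus ?thesis by (simp add: sum_negf)
qed

lemma gauss:
  fixes V :: "(K \<times> K) set"
  assumes fin: "finite V" and cl: "\<And>v w. v \<in> V \<Longrightarrow> w \<in> V \<Longrightarrow> padd v w \<in> V"
    and z0: "(0,0) \<in> V"
    and qb: "\<And>v. v \<in> V \<Longrightarrow> B01 (q v)" and q0: "q (0,0) = 0"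
    and pol: "\<And>v z. v \<in> V \<Longrightarrow> z \<in> V \<Longrightarrow> q (padd v z) = q v + q z + B v z"
    and lin: "\<And>v w z. v \<in> V \<Longrightarrow> w \<in> V \<Longrightarrow> z \<in> V \<Longrightarrow> B (padd v w) z = B v z + B w z"
    and nd: "\<And>z. z \<in> V \<Longrightarrow> z \<noteq> (0,0) \<Longrightarrow> \<exists>v\<in>V. B v z = 1"
  shows "(\<Sum>v\<in>V. sg (q v))^2 = real (card V)"
proof -
  have Bq: "B v z = q (padd v z) + q v + q z" if "v \<in> V" "z \<in> V" for v z
    using pol[OF that] by (simp add: algebra_simps)
  have Bb: "B01 (B v z)" if "v \<in> V" "z \<in> V" for v z
    using that by (simp add: Bq qb cl)
  have inner: "(\<Sum>v\<in>V. sg (B v z)) = (if z = (0,0) then real (card V) else 0)" if z: "z \<in> V" for z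
  proof (cases "z = (0,0)")
    case True
    have "B v (0,0) = 0" if "v \<in> V" for v using pol[OF that z0] q0 by simp
    thus ?thesis using True by simp
  next
    case False
    obtain v0 where "v0 \<in> V" "B v0 z = 1" using nd[OF z False] by blast
    thus ?thesis using False char_sum[OF fin cl, of "\<lambda>v. B v z" v0] z lin Bb by auto
  qed
  have "(\<Sum>v\<in>V. sg (q v))^2 = (\<Sum>v\<in>V. \<Sum>w\<in>V. sg (q v) * sg (q w))"
    by (simp add: power2_eq_square sum_product)
  also have "\<dots> = (\<Sum>v\<in>V. \<Sum>z\<in>V. sg (q v) * sg (q (padd v z)))"
  proof (rule sum.cong[OF refl])
    fix v assume v: "v \<in> V"
    show "(\<Sum>w\<in>V. sg (q v) * sg (q w)) = (\<Sum>z\<in>V. sg (q v) * sg (q (padd v z)))"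
      by (rule sum.reindex_bij_witness[where i="padd v" and j="padd v"]) (auto intro: cl v)
  qed
  also have "\<dots> = (\<Sum>v\<in>V. \<Sum>z\<in>V. sg (q z) * sg (B v z))"
  proof (intro sum.cong[OF refl])
    fix v z assume v: "v \<in> V" and z: "z \<in> V"
    have "sg (q v) * sg (q (padd v z)) = sg (q v + q (padd v z))"
      by (simp add: sg_add qb cl v z)
    also have "q v + q (padd v z) = q z + B v z" using pol[OF v z] by (simp add: algebra_simps)
    also have "sg \<dots> = sg (q z) * sg (B v z)" by (simp add: sg_add qb Bb v z)
    finally show "sg (q v) * sg (q (padd v z)) = sg (q z) * sg (B v z)" .
  qed
  also have "\<dots> = (\<Sum>z\<in>V. sg (q z) * (\<Sum>v\<in>V. sg (B v z)))"
    by (subst sum.swap) (simp add: sum_distrib_left)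
  also have "\<dots> = (\<Sum>z\<in>V. sg (q z) * (if z = (0,0) then real (card V) else 0))"
    by (rule sum.cong[OF refl]) (simp add: inner)
  also have "\<dots> = real (card V)"
    using fin z0 q0 by (simp add: if_distrib sum.delta cong: if_cong)
  finally show ?thesis .
qed



definition V :: "nat \<Rightarrow> (K \<times> K) set" where "V m = Fm m \<times> {0,1}"
definition pr :: "nat \<Rightarrow> K \<times> K \<Rightarrow> K \<times> K \<Rightarrow> K" where
  "pr m w v = tr m (fst w * fst v) + snd w * snd v"
definition Q :: "nat \<Rightarrow> K \<Rightarrow> K \<times> K \<Rightarrow> K" where
  "Q m s v = e2 m (s * fst v) + snd v * tr m (s * fst v)"
definition Bf :: "nat \<Rightarrow> K \<Rightarrow> K \<times> K \<Rightarrow> K \<times> K \<Rightarrow> K" where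
  "Bf m s v z = tr m (s * fst v) * tr m (s * fst z) + tr m ((s * fst v) * (s * fst z))
     + snd v * tr m (s * fst z) + snd z * tr m (s * fst v)"

lemma V_B01: "v \<in> V m \<Longrightarrow> B01 (snd v)" by (auto simp: V_def B01_def)
lemma V_fst: "v \<in> V m \<Longrightarrow> fst v \<in> Fm m" by (auto simp: V_def)
lemma V_padd: "v \<in> V m \<Longrightarrow> w \<in> V m \<Longrightarrow> padd v w \<in> V m"
  by (auto simp: V_def padd_def)
lemma V_0[simp]: "(0,0) \<in> V m" by (simp add: V_def)
lemma finite_V: "m \<ge> 1 \<Longrightarrow> finite (V m)" by (simp add: V_def finite_Fm)
lemma card_V: "m \<ge> 1 \<Longrightarrow> card (V m) = 2^(Suc m)"
  by (simp add: V_def card_cartesian_product card_Fm)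

lemma pr_lin: "pr m w (padd v z) = pr m w v + pr m w z"
  by (simp add: pr_def padd_def tr_add algebra_simps)
lemma pr_lin_left: "pr m (padd w w') v = pr m w v + pr m w' v"
  by (simp add: pr_def padd_def tr_add algebra_simps)
lemma pr_B01: "w \<in> V m \<Longrightarrow> v \<in> V m \<Longrightarrow> B01 (pr m w v)"
  by (simp add: pr_def V_B01 V_fst)

lemma Q_pol: "Q m s (padd v z) = Q m s v + Q m s z + Bf m s v z"
proof -
  have "s * fst (padd v z) = s * fst v + s * fst z" by (simp add: padd_def algebra_simps)
  thus ?thesis by (simp add: Q_def Bf_def e2_add tr_add padd_def algebra_simps)
qed
lemma Q_B01: "s \<in> Fm m \<Longrightarrow> v \<in> V m \<Longrightarrow> B01 (Q m s v)"
  by (simp add: Q_def V_B01 V_fst)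
lemma Q_0[simp]: "Q m s (0,0) = 0" by (simp add: Q_def)
lemma Bf_lin: "Bf m s (padd v w) z = Bf m s v z + Bf m s w z"
proof -
  have "s * fst (padd v w) = s * fst v + s * fst w" by (simp add: padd_def algebra_simps)
  thus ?thesis by (simp add: Bf_def tr_add padd_def algebra_simps)
qed

lemma tr_B01val: "B01 c \<Longrightarrow> odd m \<Longrightarrow> tr m c = c"
  by (auto simp: B01_def tr_1)
lemma tr_scal: "B01 c \<Longrightarrow> tr m (c * x) = c * tr m x"
  by (auto simp: B01_def)

lemma nondeg:
  assumes m: "m \<ge> 1" "odd m" and s: "s \<in> Fm m" "s' \<in> Fm m" "s \<noteq> s'"
    and z: "z \<in> V m" "z \<noteq> (0,0)"
  shows "\<exists>v\<in>V m. Bf m s v z + Bf m s' v z = 1"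
proof -
  obtain x a where za: "z = (x,a)" by fastforce
  have x: "x \<in> Fm m" and a: "B01 a" using z za by (auto simp: V_def B01_def)
  define u where "u = s + s'"
  have u0: "u \<noteq> 0" using s by (simp add: u_def K_add_eq0)
  have uF: "u \<in> Fm m" using s by (simp add: u_def)
  show ?thesis
  proof (cases "tr m (s*x) + tr m (s'*x) = 1")
    case True
    have "Bf m s (0,1) z + Bf m s' (0,1) z = 1" using True by (simp add: Bf_def za)
    moreover have "(0,1) \<in> V m" by (simp add: V_def)
    ultimately show ?thesis by blast
  next
    case False
    have "B01 (tr m (s*x) + tr m (s'*x))" using s x by simp
    hence "tr m (s*x) + tr m (s'*x) = 0" using False by (simp add: B01_def)
    hence eq: "tr m (s'*x) = tr m (s*x)" by (simp add: K_add_eq0)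
    define \<tau> where "\<tau> = tr m (s*x)"
    have \<tau>: "B01 \<tau>" using s x by (simp add: \<tau>_def)
    define w where "w = \<tau> * u + u * u * x + a * u"
    have wF: "w \<in> Fm m" using \<tau> a uF x by (simp add: w_def B01_Fm)
    have key: "Bf m s (y,0) z + Bf m s' (y,0) z = tr m (y * w)" for y
    proof -
      have uu: "u * u = s * s + s' * s'" by (simp add: u_def algebra_simps)
      have "tr m (y * w) = \<tau> * tr m (u * y) + tr m ((s * s + s' * s') * x * y) + a * tr m (u * y)"
        by (simp add: w_def tr_add algebra_simps uu tr_scal[OF \<tau>, symmetric] tr_scal[OF a, symmetric])
      also have "\<dots> = Bf m s (y,0) z + Bf m s' (y,0) z"
        by (simp add: Bf_def za eq \<tau>_def u_def tr_add algebra_simps)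
      finally show ?thesis by simp
    qed
    show ?thesis
    proof (cases "w = 0")
      case False
      obtain y where y: "y \<in> Fm m" "tr m (w * y) = 1" using tr_nondeg[OF m(1) wF False] by blast
      have "(y,0) \<in> V m" using y by (simp add: V_def)
      moreover have "Bf m s (y,0) z + Bf m s' (y,0) z = 1" using key y by (simp add: mult.commute)
      ultimately show ?thesis by blast
    next
      case True
      hence "u * (\<tau> + u * x + a) = 0" by (simp add: w_def algebra_simps)
      hence "\<tau> + u * x + a = 0" using u0 by simp
      hence ux: "u * x = \<tau> + a" by (metis K_add_eq0 add.commute add.left_commute)
      have "tr m (u * x) = tr m (s*x) + tr m (s'*x)" by (simp add: u_def tr_add algebra_simps)
      hence "tr m (u * x) = 0" using eq by simp
      moreover have "tr m (u * x) = \<tau> + a" using ux tr_B01val[of "\<tau> + a" m] \<tau> a m by simp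
      ultimately have ta: "\<tau> + a = 0" by simp
      hence "x = 0" using ux u0 by simp
      hence "\<tau> = 0" by (simp add: \<tau>_def)
      hence "a = 0" using ta by simp
      thus ?thesis using z za \<open>x = 0\<close> by simp
    qed
  qed
qed

lemma kerdock_cross:
  assumes m: "m \<ge> 1" "odd m" and s: "s \<in> Fm m" "s' \<in> Fm m" "s \<noteq> s'"
    and l: "l \<in> V m" "l' \<in> V m"
  shows "(\<Sum>v\<in>V m. sg (Q m s v + pr m l v) * sg (Q m s' v + pr m l' v))^2 = real (card (V m))"
proof -
  define q where "q v = Q m s v + Q m s' v + pr m l v + pr m l' v" for v
  have eq: "sg (Q m s v + pr m l v) * sg (Q m s' v + pr m l' v) = sg (q v)" if "v \<in> V m" for v
    using that s l by (simp add: sg_add[symmetric] Q_B01 pr_B01 q_def algebra_simps)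
  have "(\<Sum>v\<in>V m. sg (q v))^2 = real (card (V m))"
  proof (rule gauss[where B="\<lambda>v z. Bf m s v z + Bf m s' v z"])
    show "finite (V m)" using m by (simp add: finite_V)
    show "padd v w \<in> V m" if "v \<in> V m" "w \<in> V m" for v w using that by (rule V_padd)
    show "(0,0) \<in> V m" by simp
    show "B01 (q v)" if "v \<in> V m" for v using that s l by (simp add: q_def Q_B01 pr_B01)
    show "q (0,0) = 0" by (simp add: q_def pr_def)
    show "q (padd v z) = q v + q z + (Bf m s v z + Bf m s' v z)" for v z
      by (simp add: q_def Q_pol pr_lin algebra_simps)
    show "Bf m s (padd v w) z + Bf m s' (padd v w) z = (Bf m s v z + Bf m s' v z) + (Bf m s w z + Bf m s' w z)" for v w z
      by (simp add: Bf_lin algebra_simps)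
    show "\<exists>v\<in>V m. Bf m s v z + Bf m s' v z = 1" if "z \<in> V m" "z \<noteq> (0,0)" for z
      using nondeg[OF m s that] .
  qed
  moreover have "(\<Sum>v\<in>V m. sg (Q m s v + pr m l v) * sg (Q m s' v + pr m l' v)) = (\<Sum>v\<in>V m. sg (q v))"
    using eq by (rule sum.cong[OF refl])
  ultimately show ?thesis by simp
qed

lemma kerdock_same:
  assumes m: "m \<ge> 1" and s: "s \<in> Fm m"
    and l: "l \<in> V m" "l' \<in> V m" "l \<noteq> l'"
  shows "(\<Sum>v\<in>V m. sg (Q m s v + pr m l v) * sg (Q m s v + pr m l' v)) = 0"
proof -
  define w where "w = padd l l'"
  have wV: "w \<in> V m" using l by (simp add: w_def V_padd)
  have w0: "w \<noteq> (0,0)" using l by (auto simp: w_def padd_def K_add_eq0 prod_eq_iff)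
  have eq: "sg (Q m s v + pr m l v) * sg (Q m s v + pr m l' v) = sg (pr m w v)" if "v \<in> V m" for v
  proof -
    have "sg (Q m s v + pr m l v) * sg (Q m s v + pr m l' v) = sg (Q m s v + pr m l v + (Q m s v + pr m l' v))"
      using that s l by (simp add: sg_add Q_B01 pr_B01)
    also have "Q m s v + pr m l v + (Q m s v + pr m l' v) = pr m w v"
      by (simp add: w_def pr_lin_left algebra_simps)
    finally show ?thesis .
  qed
  have "\<exists>v0\<in>V m. pr m w v0 = 1"
  proof (cases "fst w = 0")
    case False
    obtain y where y: "y \<in> Fm m" "tr m (fst w * y) = 1" using tr_nondeg[OF m V_fst[OF wV] False] by blast
    have "(y,0) \<in> V m" using y by (simp add: V_def)
    thus ?thesis using y by (intro bexI[of _ "(y,0)"]) (auto simp: pr_def)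
  next
    case True
    hence "snd w = 1" using w0 V_B01[OF wV] by (cases w) (auto simp: B01_def)
    moreover have "(0,1) \<in> V m" by (simp add: V_def)
    ultimately show ?thesis using True by (auto simp: pr_def intro!: bexI[of _ "(0,1)"])
  qed
  then obtain v0 where v0: "v0 \<in> V m" "pr m w v0 = 1" by blast
  have "(\<Sum>v\<in>V m. sg (pr m w v)) = 0"
    by (rule char_sum[where l="pr m w", OF finite_V[OF m] V_padd _ _ v0]) (auto simp: pr_lin pr_B01 wV)
  thus ?thesis using eq by (simp cong: sum.cong)
qed



lemma transfer:
  fixes I :: "'i set" and E :: "'e set" and u :: "'e \<Rightarrow> 'i \<Rightarrow> real"
  assumes finI: "finite I" and cardI: "card I \<le> CARD('n::finite)" and finE: "finite E"
    and nrm: "\<And>e. e \<in> E \<Longrightarrow> (\<Sum>x\<in>I. u e x * u e x) = N2" and N2: "N2 > 0"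
    and crs: "\<And>e e'. e \<in> E \<Longrightarrow> e' \<in> E \<Longrightarrow> e \<noteq> e' \<Longrightarrow> \<bar>\<Sum>x\<in>I. u e x * u e' x\<bar> = C"
    and CN: "C < N2"
  shows "\<exists>v::nat \<Rightarrow> real^'n. equiangular_lines v (card E)"
proof -
  obtain \<iota> :: "'i \<Rightarrow> 'n" where inj: "inj_on \<iota> I"
    using card_le_inj[OF finI finite[of "UNIV :: 'n set"]] cardI by auto
  obtain h where h: "bij_betw h {0..<card E} E" using ex_bij_betw_nat_finite[OF finE] by blast
  define w :: "'e \<Rightarrow> real^'n" where
    "w e = (\<chi> j. if j \<in> \<iota> ` I then u e (inv_into I \<iota> j) else 0)" for e
  have winner: "inner (w e) (w e') = (\<Sum>x\<in>I. u e x * u e' x)" for e e'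
  proof -
    have "inner (w e) (w e') = (\<Sum>j\<in>UNIV. (w e $ j) * (w e' $ j))" by (simp add: inner_vec_def)
    also have "\<dots> = (\<Sum>j\<in>\<iota> ` I. u e (inv_into I \<iota> j) * u e' (inv_into I \<iota> j))"
      by (rule sum.mono_neutral_cong_right) (auto simp: w_def)
    also have "\<dots> = (\<Sum>x\<in>I. u e x * u e' x)"
      using inj by (simp add: sum.reindex)
    finally show ?thesis .
  qed
  define v where "v i = (1 / sqrt N2) *\<^sub>R w (h i)" for i
  have vin: "inner (v i) (v j) = (\<Sum>x\<in>I. u (h i) x * u (h j) x) / N2" for i j
    using N2 by (simp add: v_def winner real_sqrt_mult[symmetric])
  have hE: "i < card E \<Longrightarrow> h i \<in> E" for i using h by (auto simp: bij_betw_def)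
  have hinj: "i < card E \<Longrightarrow> j < card E \<Longrightarrow> i \<noteq> j \<Longrightarrow> h i \<noteq> h j" for i j
    using h by (auto simp: bij_betw_def inj_on_def)
  have nv: "norm (v i) = 1" if "i < card E" for i
    using vin[of i i] nrm[OF hE[OF that]] N2 by (simp add: norm_eq_sqrt_inner)
  have cv: "\<bar>inner (v i) (v j)\<bar> = C / N2" if "i < card E" "j < card E" "i \<noteq> j" for i j
    using vin[of i j] crs[OF hE[OF that(1)] hE[OF that(2)] hinj[OF that]] N2 by simp
  have sp: "span {v i} \<noteq> span {v j}" if "i < card E" "j < card E" "i \<noteq> j" for i j
  proof
    assume "span {v i} = span {v j}"
    hence "v i \<in> span {v j}" by (metis span_base singletonI)
    then obtain k where k: "v i = k *\<^sub>R v j" by (auto simp: span_singleton)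
    have "norm (v i) = \<bar>k\<bar> * norm (v j)" using k by simp
    hence "\<bar>k\<bar> = 1" using nv that by simp
    moreover have "inner (v i) (v j) = k" using k nv[OF that(2)] by (simp add: power2_norm_eq_inner[symmetric])
    ultimately have "\<bar>inner (v i) (v j)\<bar> = 1" by simp
    thus False using cv[OF that] CN N2 by simp
  qed
  have "equiangular_lines v (card E)"
    unfolding equiangular_lines_def
    using nv sp cv by (intro conjI allI impI exI[of _ "C / N2"]) auto
  thus ?thesis by blast
qed



lemma level:
  fixes g t :: nat
  assumes t: "t \<ge> 1" and g: "g \<le> 2*4^(t-1)+1" and n: "4^t + g \<le> CARD('n::finite)"
  shows "\<exists>v::nat \<Rightarrow> real^'n. equiangular_lines v (g * 4^t)"
proof -
  define m where "m = 2*t - 1"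
  have m1: "m \<ge> 1" and modd: "odd m" using t by (auto simp: m_def)
  have Sm: "Suc m = 2*t" using t by (simp add: m_def)
  have cV: "card (V m) = 4^t" using card_V[OF m1] Sm by (simp add: power_mult)
  have finV: "finite (V m)" using finite_V[OF m1] .
  have p2m: "(2::nat)^m = 2*4^(t-1)"
  proof -
    have "m = Suc (2*(t-1))" using t by (simp add: m_def)
    thus ?thesis by (simp add: power_mult)
  qed
  define Gall where "Gall = insert None (Some ` Fm m)"
  have cG: "card Gall = 2*4^(t-1)+1"
    using finite_Fm[OF m1] card_Fm[OF m1] p2m by (simp add: Gall_def card_image)
  obtain Gs where Gs: "Gs \<subseteq> Gall" "card Gs = g" "finite Gs"
    using obtain_subset_with_card_n[of g Gall] g cG by auto
  define a :: real where "a = 2^t"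
  define r where "r = sqrt a"
  have a2: "a * a = real (card (V m))"
  proof -
    have "(4::real)^t = (2*2)^t" by simp
    also have "\<dots> = 2^t * 2^t" by (rule power_mult_distrib)
    finally show ?thesis using cV by (simp add: a_def)
  qed
  have a_pos: "a \<ge> 2"
  proof -
    have "(2::real)^1 \<le> 2^t" by (rule power_increasing) (use t in auto)
    thus ?thesis by (simp add: a_def)
  qed
  have rr: "r * r = a" using a_pos by (simp add: r_def)
  define I where "I = V m <+> Gs"
  define E where "E = Gs \<times> V m"
  define u :: "K option \<times> (K \<times> K) \<Rightarrow> (K \<times> K) + K option \<Rightarrow> real" where
    "u e x = (case x of Inl v \<Rightarrow> (case fst e of None \<Rightarrow> (if v = snd e then a else 0)
                                       | Some s \<Rightarrow> sg (Q m s v + pr m (snd e) v))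
                   | Inr h \<Rightarrow> (if h = fst e then r else 0))" for e x
  define P where "P e e' = (\<Sum>v\<in>V m. u e (Inl v) * u e' (Inl v))" for e e'
  have split: "(\<Sum>x\<in>I. u e x * u e' x) = P e e' + (if fst e = fst e' then a else 0)"
    if "e \<in> E" "e' \<in> E" for e e'
  proof -
    have "(\<Sum>x\<in>I. u e x * u e' x) = P e e' + (\<Sum>h\<in>Gs. u e (Inr h) * u e' (Inr h))"
      unfolding I_def P_def using finV Gs(3) by (simp add: sum.Plus comp_def)
    also have "(\<Sum>h\<in>Gs. u e (Inr h) * u e' (Inr h)) = (\<Sum>h\<in>Gs. if h = fst e then (if fst e = fst e' then a else 0) else 0)"
      by (rule sum.cong) (auto simp: u_def rr)
    also have "\<dots> = (if fst e = fst e' then a else 0)"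
      using that Gs(3) by (auto simp: E_def sum.delta)
    finally show ?thesis .
  qed
  have grp: "gr = None \<or> (\<exists>s\<in>Fm m. gr = Some s)" if "gr \<in> Gs" for gr
    using that Gs(1) by (auto simp: Gall_def)
  have Pself: "P e e = a * a" if "e \<in> E" for e
  proof -
    obtain gr l where e0: "e = (gr, l)" by (cases e) auto
    with that have e: "e = (gr, l)" "gr \<in> Gs" "l \<in> V m" by (auto simp: E_def)
    show ?thesis
    proof (cases gr)
      case None
      have "P e e = (\<Sum>v\<in>V m. if v = l then a * a else 0)"
        unfolding P_def by (rule sum.cong) (auto simp: u_def e None)
      thus ?thesis using e finV by simp
    next
      case (Some s)
      have "P e e = (\<Sum>v\<in>V m. 1)"
        unfolding P_def by (rule sum.cong) (auto simp: u_def e Some)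
      thus ?thesis using a2 by simp
    qed
  qed
  have Psame: "P e e' = 0" if "e \<in> E" "e' \<in> E" "e \<noteq> e'" "fst e = fst e'" for e e'
  proof -
    obtain gr l where e0: "e = (gr, l)" by (cases e) auto
    obtain gr' l' where e1: "e' = (gr', l')" by (cases e') auto
    from that e0 e1 have e: "e = (gr, l)" "e' = (gr, l')" "gr \<in> Gs" "l \<in> V m" "l' \<in> V m" "l \<noteq> l'"
      by (auto simp: E_def)
    show ?thesis
    proof (cases gr)
      case None
      have "P e e' = (\<Sum>v\<in>V m. 0)"
        unfolding P_def by (rule sum.cong) (use e(6) in \<open>auto simp: u_def e(1,2) None\<close>)
      thus ?thesis by simp
    next
      case (Some s)
      have s: "s \<in> Fm m" using grp[OF e(3)] Some by auto
      have "P e e' = (\<Sum>v\<in>V m. sg (Q m s v + pr m l v) * sg (Q m s v + pr m l' v))"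
        unfolding P_def by (rule sum.cong) (auto simp: u_def e Some)
      thus ?thesis using kerdock_same[OF m1 s e(4,5,6)] by simp
    qed
  qed
  have Pdiff: "\<bar>P e e'\<bar> = a" if "e \<in> E" "e' \<in> E" "fst e \<noteq> fst e'" for e e'
  proof -
    obtain gr l where e0: "e = (gr, l)" by (cases e) auto
    obtain gr' l' where e1: "e' = (gr', l')" by (cases e') auto
    from that e0 e1 have e: "e = (gr, l)" "e' = (gr', l')" "gr \<in> Gs" "l \<in> V m"
      "gr' \<in> Gs" "l' \<in> V m" "gr \<noteq> gr'"
      by (auto simp: E_def)
    show ?thesis
    proof (cases gr)
      case None
      then obtain s' where s': "gr' = Some s'" "s' \<in> Fm m" using grp[OF e(5)] e(7) by auto
      have "P e e' = (\<Sum>v\<in>V m. if v = l then a * sg (Q m s' v + pr m l' v) else 0)"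
        unfolding P_def by (rule sum.cong) (auto simp: u_def e None s')
      also have "\<dots> = a * sg (Q m s' l + pr m l' l)" using finV e(4) by simp
      finally show ?thesis using a_pos by (simp add: abs_mult)
    next
      case (Some s)
      have s: "s \<in> Fm m" using grp[OF e(3)] Some by auto
      show ?thesis
      proof (cases gr')
        case None
        have "P e e' = (\<Sum>v\<in>V m. if v = l' then a * sg (Q m s v + pr m l v) else 0)"
          unfolding P_def by (rule sum.cong) (auto simp: u_def e None Some)
        also have "\<dots> = a * sg (Q m s l' + pr m l l')" using finV e(6) by simp
        finally show ?thesis using a_pos by (simp add: abs_mult)
      next
        case (Some s')
        have s': "s' \<in> Fm m" using grp[OF e(5)] Some by auto
        have ss: "s \<noteq> s'" using e(7) Some \<open>gr = Some s\<close> by simp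
        have "P e e' = (\<Sum>v\<in>V m. sg (Q m s v + pr m l v) * sg (Q m s' v + pr m l' v))"
          unfolding P_def by (rule sum.cong) (auto simp: u_def e Some \<open>gr = Some s\<close>)
        hence "(P e e')^2 = a^2" using kerdock_cross[OF m1 modd s s' ss e(4,6)] a2
          by (simp add: power2_eq_square)
        hence "\<bar>P e e'\<bar> = \<bar>a\<bar>" by (rule power2_eq_iff[THEN iffD1, THEN disjE]) auto
        thus ?thesis using a_pos by simp
      qed
    qed
  qed
  have "\<exists>v::nat \<Rightarrow> real^'n. equiangular_lines v (card E)"
  proof (rule transfer[where I=I and u=u and ?N2.0="a * a + a" and C=a])
    show "finite I" using finV Gs(3) by (simp add: I_def)
    show "card I \<le> CARD('n)" using finV Gs n cV by (simp add: I_def card_Plus)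
    show "finite E" using finV Gs(3) by (simp add: E_def)
    show "(\<Sum>x\<in>I. u e x * u e x) = a * a + a" if "e \<in> E" for e
      using split[OF that that] Pself[OF that] by simp
    show "a * a + a > 0" using a_pos mult_pos_pos[of a a] by linarith
    show "\<bar>\<Sum>x\<in>I. u e x * u e' x\<bar> = a" if "e \<in> E" "e' \<in> E" "e \<noteq> e'" for e e'
    proof (cases "fst e = fst e'")
      case True thus ?thesis using split[OF that(1,2)] Psame[OF that True] a_pos by simp
    next
      case False thus ?thesis using split[OF that(1,2)] Pdiff[OF that(1,2) False] by simp
    qed
    show "a < a * a + a" using a_pos mult_pos_pos[of a a] by linarith
  qed
  moreover have "card E = g * 4^t" using finV Gs cV by (simp add: E_def card_cartesian_product)
  ultimately show ?thesis by simp
qed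



lemma basis: "\<exists>v::nat \<Rightarrow> real^'n::finite. equiangular_lines v CARD('n)"
proof -
  have "\<exists>v::nat \<Rightarrow> real^'n. equiangular_lines v (card (UNIV::'n set))"
  proof (rule transfer[where I="UNIV::'n set" and u="\<lambda>e x. if e = x then 1 else 0" and ?N2.0=1 and C=0])
    fix e :: 'n
    have "(\<Sum>x\<in>UNIV. (if e = x then 1 else 0) * (if e = x then (1::real) else 0)) = (\<Sum>x\<in>UNIV. if e = x then 1 else 0)"
      by (rule sum.cong) auto
    also have "\<dots> = 1" by (simp add: sum.delta sum.delta')
    finally show "(\<Sum>x\<in>UNIV. (if e = x then 1 else 0) * (if e = x then (1::real) else 0)) = 1" .
  qed (auto intro!: sum.neutral)
  thus ?thesis by simp
qed

lemma ex_t: "2 \<le> (N::nat) \<Longrightarrow> \<exists>t. 4^t < N \<and> N \<le> 4*4^t"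
proof (induction N rule: nat_induct_at_least)
  case base thus ?case by (intro exI[of _ 0]) auto
next
  case (Suc N)
  then obtain t where t: "4^t < N" "N \<le> 4*4^t" by blast
  show ?case
  proof (cases "Suc N \<le> 4*4^t")
    case True thus ?thesis using t by (intro exI[of _ t]) auto
  next
    case False
    hence "N = 4*4^t" using t by simp
    thus ?thesis by (intro exI[of _ "Suc t"]) auto
  qed
qed

lemma arithB:
  fixes e x :: int
  assumes "e \<ge> 1" "2*e+1 \<le> x" "x \<le> 32*e+1"
  shows "8*(64*e+x)*(4*(64*e+x)+33) \<le> 1089*(x*(64*e))"
proof -
  have h1: "0 \<le> (x - 2*e - 1)*(32*e + 1 - x)" using assms by simp
  have h2: "0 \<le> e*(x - 2*e - 1)" using assms by simp
  show ?thesis using assms h1 h2 by (simp add: algebra_simps) 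
qed

lemma conv:
  fixes N r :: nat
  assumes "8*N*(4*N+33) \<le> 1089*r"
  shows "8 / 1089 * real N * (4 * real N + 33) \<le> real r"
proof -
  have "real (8*N*(4*N+33)) \<le> real (1089*r)" using assms by (simp only: of_nat_le_iff)
  hence "8 * real N * (4 * real N + 33) \<le> 1089 * real r" by simp
  thus ?thesis by simp
qed

theorem main:
  shows "\<exists>(v :: nat \<Rightarrow> real ^ 'n::finite) r.
           equiangular_lines v r \<and>
           real r \<ge> 8 / 1089 * real CARD('n) * (4 * real CARD('n) + 33)"
proof -
  define N where "N = CARD('n)"
  have N1: "N \<ge> 1" by (simp add: N_def Suc_le_eq)
  have goal: "\<exists>(v :: nat \<Rightarrow> real ^ 'n) r. equiangular_lines v r \<and> 8*N*(4*N+33) \<le> 1089*r"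
  proof (cases "N \<le> 25")
    case True
    obtain v :: "nat \<Rightarrow> real^'n" where "equiangular_lines v N" using basis N_def by blast
    moreover have "8*N*(4*N+33) \<le> 1089*N"
    proof -
      have "8*(4*N+33) \<le> 1089" using True by simp
      hence "N*(8*(4*N+33)) \<le> N*1089" by (rule mult_le_mono2)
      thus ?thesis by (simp add: algebra_simps)
    qed
    ultimately show ?thesis by blast
  next
    case False
    obtain t where t: "4^t < N" "N \<le> 4*4^t" using ex_t[of N] False by auto
    have t2: "t \<ge> 2"
    proof (rule ccontr)
      assume "\<not> t \<ge> 2"
      hence "t \<le> 1" by simp
      hence "(4::nat)^t \<le> 4^1" by (rule power_increasing) simp
      thus False using t False by simp
    qed
    show ?thesis
    proof (cases "t = 2")
      case True
      obtain v :: "nat \<Rightarrow> real^'n" where "equiangular_lines v (9 * 4^2)"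
        using level[of 2 9, where 'n='n] False N_def by auto
      moreover have "8*N*(4*N+33) \<le> 1089*(9*4^2)"
      proof -
        have "N \<le> 64" using t True by simp
        hence "8*N*(4*N+33) \<le> 8*64*(4*64+33)" by (intro mult_le_mono) auto
        thus ?thesis by simp
      qed
      ultimately show ?thesis by blast
    next
      case False
      hence t3: "t \<ge> 3" using t2 by simp
      define e where "e = (4::nat)^(t-3)"
      have e1: "e \<ge> 1" by (simp add: e_def)
      have d: "(4::nat)^t = 64*e"
      proof -
        have "t = 3 + (t-3)" using t3 by simp
        hence "(4::nat)^t = 4^3 * 4^(t-3)" by (metis power_add)
        thus ?thesis by (simp add: e_def)
      qed
      have d1: "(4::nat)^(t-1) = 16*e"
      proof -
        have "t-1 = 2 + (t-3)" using t3 by simp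
        hence "(4::nat)^(t-1) = 4^2 * 4^(t-3)" by (metis power_add)
        thus ?thesis by (simp add: e_def)
      qed
      have d2: "(4::nat)^(t-1-1) = 4*e"
      proof -
        have "t-1-1 = 1 + (t-3)" using t3 by simp
        hence "(4::nat)^(t-1-1) = 4^1 * 4^(t-3)" by (metis power_add)
        thus ?thesis by (simp add: e_def)
      qed
      define x where "x = N - 64*e"
      have Nx: "N = 64*e + x" "x \<ge> 1" using t d by (auto simp: x_def)
      have Nup: "N \<le> 256*e" using t d by simp
      consider (C) "x \<le> 2*e" | (B) "2*e+1 \<le> x" "x \<le> 32*e+1" | (A) "32*e+2 \<le> x" by linarith
      thus ?thesis
      proof cases
        case C
        have "\<exists>v::nat \<Rightarrow> real^'n. equiangular_lines v ((8*e+1) * 4^(t-1))"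
          by (rule level) (use t3 d1 d2 Nx in \<open>auto simp: N_def\<close>)
        then obtain v :: "nat \<Rightarrow> real^'n" where "equiangular_lines v ((8*e+1) * (16*e))"
          using d1 by auto
        moreover have "8*N*(4*N+33) \<le> 1089*((8*e+1) * (16*e))"
        proof -
          have "N \<le> 66*e" using C Nx by simp
          hence "8*N*(4*N+33) \<le> 8*(66*e)*(4*(66*e)+33)" by (intro mult_le_mono) auto
          also have "\<dots> = 1089*((8*e+1) * (16*e))" by (simp add: algebra_simps)
          finally show ?thesis .
        qed
        ultimately show ?thesis by blast
      next
        case B
        have "\<exists>v::nat \<Rightarrow> real^'n. equiangular_lines v (x * 4^t)"
          by (rule level) (use t3 d1 d Nx B in \<open>auto simp: N_def\<close>)
        then obtain v :: "nat \<Rightarrow> real^'n" where "equiangular_lines v (x * (64*e))"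
          using d by auto
        moreover have "8*N*(4*N+33) \<le> 1089*(x * (64*e))"
        proof -
          have "int (8*N*(4*N+33)) \<le> int (1089*(x * (64*e)))"
            using arithB[of "int e" "int x"] e1 B Nx by simp
          thus ?thesis by linarith
        qed
        ultimately show ?thesis by blast
      next
        case A
        have "\<exists>v::nat \<Rightarrow> real^'n. equiangular_lines v ((32*e+1) * 4^t)"
          by (rule level) (use t3 d1 d Nx A in \<open>auto simp: N_def\<close>)
        then obtain v :: "nat \<Rightarrow> real^'n" where "equiangular_lines v ((32*e+1) * (64*e))"
          using d by auto
        moreover have "8*N*(4*N+33) \<le> 1089*((32*e+1) * (64*e))"
        proof -
          have "8*N*(4*N+33) \<le> 8*(256*e)*(4*(256*e)+33)" using Nup by (intro mult_le_mono) auto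
          also have "\<dots> \<le> 1089*((32*e+1) * (64*e))" by (simp add: algebra_simps)
          finally show ?thesis .
        qed
        ultimately show ?thesis by blast
      qed
    qed
  qed
  then obtain v :: "nat \<Rightarrow> real^'n" and r where "equiangular_lines v r" "8*N*(4*N+33) \<le> 1089*r" by blast
  thus ?thesis using conv N_def by blast
qed


theorem corollary2:
  shows "\<exists>(v :: nat \<Rightarrow> real ^ 'n) r.
           equiangular_lines v r \<and>
           real r \<ge> 8 / 1089 * real CARD('n) * (4 * real CARD('n) + 33)"
  by (rule main)

end
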